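(* Let $L$ be the lattice of IHS manifolds of a given deformation type, $M$ a lattice of signature $(1,t)$ with a primitive embedding $j\colon M\hookrightarrow L$, and $N=j(M)^\perp$. If $\mathrm{Mo}^2(L)\supset\tilde{SO}^+(L)$, then $\Gamma_{M,j}$ is an arithmetic subgroup of $O(N)$.
   Context: $\mathrm{Mo}^2(L)=\phi\,\mathrm{Mo}^2(X)\,\phi^{-1}\subset O(L)$ is the monodromy group of the IHS manifolds transported to $L$ by a marking $\phi$. $\mathrm{Mo}^2(M,j)=\{g\in\mathrm{Mo}^2(L):g|_{j(M)}=\mathrm{id}\}$ and $\Gamma_{M,j}\subset O(N)$ is its image under restriction to $N$. For a lattice $\Lambda$ with discriminant group $A_\Lambda=\Lambda^*/\Lambda$: $\tilde O^+(\Lambda)=\{g\in O(\Lambda): g|_{A_\Lambda}=\mathrm{id}$, real spinor norm of $g$ equal to $1\}$, where the real spinor norm of $g=\rho_{v_1}\cdots\rho_{v_m}$ (reflections, $v_i\in\Lambda_{\mathbb R}$) is $\prod(-v_i^2/2)$ modulo squares; $\tilde{SO}^+(\Lambda)=\{g\in\tilde O^+(\Lambda):\det g=1\}$. *)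

theory Defs
  imports "HOL-Analysis.Analysis" "HOL-Algebra.Coset"
begin

definition bform :: "'a::comm_ring_1^'n^'n \<Rightarrow> 'a^'n \<Rightarrow> 'a^'n \<Rightarrow> 'a" where
  "bform B x y = (\<Sum>i\<in>UNIV. \<Sum>k\<in>UNIV. x$i * B$i$k * y$k)"

definition ivec :: "int^'n \<Rightarrow> 'a::ring_1^'n" where
  "ivec v = (\<chi> i. of_int (v$i))"

definition imat :: "int^'n^'m \<Rightarrow> 'a::ring_1^'n^'m" where
  "imat A = (\<chi> i k. of_int (A$i$k))"

definition symmetric_gram :: "'a^'n^'n \<Rightarrow> bool" where
  "symmetric_gram B \<longleftrightarrow> transpose B = B"

definition pos_index :: "int^'n^'n \<Rightarrow> nat" where
  "pos_index B = (GREATEST d. \<exists>V::(real^'n) set. subspace V \<and> dim V = d \<and>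
       (\<forall>v\<in>V. v \<noteq> 0 \<longrightarrow> bform (imat B) v v > 0))"

definition nondegenerate :: "int^'n^'n \<Rightarrow> bool" where
  "nondegenerate B \<longleftrightarrow> det B \<noteq> 0"

text \<open>Lattice of signature (p, q) for some q.\<close>
definition has_pos_signature :: "int^'n^'n \<Rightarrow> nat \<Rightarrow> bool" where
  "has_pos_signature B p \<longleftrightarrow> symmetric_gram B \<and> nondegenerate B \<and> pos_index B = p"

definition even_lattice :: "int^'n^'n \<Rightarrow> bool" where
  "even_lattice B \<longleftrightarrow> (\<forall>x. even (bform B x x))"

definition O_L :: "int^'n^'n \<Rightarrow> (int^'n^'n) set" where
  "O_L B = {g. (\<exists>h. g ** h = mat 1 \<and> h ** g = mat 1) \<and> transpose g ** B ** g = B}"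

text \<open>g acts trivially on the discriminant group L^*/L.\<close>
definition trivial_on_discr :: "int^'n^'n \<Rightarrow> int^'n^'n \<Rightarrow> bool" where
  "trivial_on_discr B g \<longleftrightarrow>
     (\<forall>y::rat^'n. (\<forall>x::int^'n. bform (imat B) y (ivec x) \<in> \<int>) \<longrightarrow>
        (\<exists>z::int^'n. imat g *v y - y = ivec z))"

definition reflection :: "real^'n^'n \<Rightarrow> real^'n \<Rightarrow> real^'n \<Rightarrow> real^'n" where
  "reflection B v x = x - (2 * bform B x v / bform B v v) *\<^sub>R v"

text \<open>Real spinor norm 1: g = rho_{v_1} ... rho_{v_m} with prod (-v_i^2/2) a positive
  real (i.e. equal to 1 modulo squares).\<close>
definition real_spinor_norm_one :: "int^'n^'n \<Rightarrow> int^'n^'n \<Rightarrow> bool" where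
  "real_spinor_norm_one B g \<longleftrightarrow>
     (\<exists>vs::(real^'n) list. (\<forall>v\<in>set vs. bform (imat B) v v \<noteq> 0) \<and>
        (\<lambda>x. (imat g :: real^'n^'n) *v x) = foldr (\<lambda>v f. reflection (imat B) v \<circ> f) vs id \<and>
        prod_list (map (\<lambda>v. - bform (imat B) v v / 2) vs) > 0)"

definition tO_plus :: "int^'n^'n \<Rightarrow> (int^'n^'n) set" where
  "tO_plus B = {g \<in> O_L B. trivial_on_discr B g \<and> real_spinor_norm_one B g}"

definition tSO_plus :: "int^'n^'n \<Rightarrow> (int^'n^'n) set" where
  "tSO_plus B = {g \<in> tO_plus B. det g = 1}"

text \<open>j : M \<rightarrow> L given by the matrix J (x \<mapsto> J *v x); isometric, injective, with
  L / j(M) torsion free.\<close>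
definition primitive_embedding :: "int^'n^'n \<Rightarrow> int^'m^'m \<Rightarrow> int^'m^'n \<Rightarrow> bool" where
  "primitive_embedding B BM J \<longleftrightarrow>
     inj (\<lambda>x. J *v x) \<and> transpose J ** B ** J = BM \<and>
     (\<forall>x::int^'n. \<forall>k::int. k \<noteq> 0 \<longrightarrow> k *s x \<in> range (\<lambda>m. J *v m) \<longrightarrow> x \<in> range (\<lambda>m. J *v m))"

definition orth_compl :: "int^'n^'n \<Rightarrow> int^'m^'n \<Rightarrow> (int^'n) set" where
  "orth_compl B J = {x. \<forall>m. bform B x (J *v m) = 0}"

definition O_sub :: "int^'n^'n \<Rightarrow> (int^'n) set \<Rightarrow> (int^'n \<Rightarrow> int^'n) monoid" where
  "O_sub B N = \<lparr> carrier = {f. f \<in> extensional N \<and> bij_betw f N N \<and>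
        (\<forall>x\<in>N. \<forall>y\<in>N. f (x + y) = f x + f y) \<and>
        (\<forall>x\<in>N. \<forall>y\<in>N. bform B (f x) (f y) = bform B x y)},
      mult = (\<lambda>f g. compose N f g), one = restrict id N \<rparr>"

definition Mo_fix :: "(int^'n^'n) set \<Rightarrow> int^'m^'n \<Rightarrow> (int^'n^'n) set" where
  "Mo_fix Mo J = {g \<in> Mo. \<forall>m. g *v (J *v m) = J *v m}"

definition Gamma :: "int^'n^'n \<Rightarrow> int^'m^'n \<Rightarrow> (int^'n^'n) set \<Rightarrow> (int^'n \<Rightarrow> int^'n) set" where
  "Gamma B J Mo = (\<lambda>g. restrict (\<lambda>x. g *v x) (orth_compl B J)) ` Mo_fix Mo J"

text \<open>Arithmetic subgroup of O(N), for a subgroup contained in O(N): finite index.\<close>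
definition arithmetic_subgroup :: "(int^'n \<Rightarrow> int^'n) set \<Rightarrow> (int^'n \<Rightarrow> int^'n) monoid \<Rightarrow> bool" where
  "arithmetic_subgroup H G \<longleftrightarrow> subgroup H G \<and> finite (rcosets\<^bsub>G\<^esub> H)"

end

theory Submission
  imports Defs
begin

lemma bform_alt: "bform B x y = (\<Sum>i\<in>UNIV. x$i * (B *v y)$i)"
  by (simp add: bform_def matrix_vector_mult_def sum_distrib_left mult.assoc)

lemma bform_add1: "bform B (x + x') y = bform B x y + bform B x' y"
  by (simp add: bform_def algebra_simps sum.distrib)
lemma bform_add2: "bform B x (y + y') = bform B x y + bform B x y'"
  by (simp add: bform_def algebra_simps sum.distrib)
lemma bform_diff1: "bform B (x - x') y = bform B x y - bform B x' y"
  by (simp add: bform_def algebra_simps sum_subtractf)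
lemma bform_diff2: "bform B x (y - y') = bform B x y - bform B x y'"
  by (simp add: bform_def algebra_simps sum_subtractf)
lemma bform_neg1: "bform B (- x) y = - bform B x y"
  by (simp add: bform_def sum_negf)
lemma bform_neg2: "bform B x (- y) = - bform B x y"
  by (simp add: bform_def sum_negf)
lemma bform_zero1[simp]: "bform B 0 y = 0"
  by (simp add: bform_def)
lemma bform_zero2[simp]: "bform B x 0 = 0"
  by (simp add: bform_def)
lemma bform_smult1: "bform B (c *s x) y = c * bform B x y"
  by (simp add: bform_def sum_distrib_left algebra_simps)
lemma bform_smult2: "bform B x (c *s y) = c * bform B x y"
  by (simp add: bform_def sum_distrib_left algebra_simps)
lemma bform_scaleR1: "bform (B::real^'n^'n) (c *\<^sub>R x) y = c * bform B x y"
  by (simp add: bform_def sum_distrib_left algebra_simps)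
lemma bform_scaleR2: "bform (B::real^'n^'n) x (c *\<^sub>R y) = c * bform B x y"
  by (simp add: bform_def sum_distrib_left algebra_simps)

lemma bform_sym: "transpose B = B \<Longrightarrow> bform B x y = bform B y x"
  unfolding bform_def
  apply (subst sum.swap)
  apply (rule sum.cong[OF refl])+
proof -
  fix i k assume "transpose B = B"
  then have "B$k$i = B$i$k" by (metis transpose_def vec_lambda_beta)
  then show "x $ k * B $ k $ i * y $ i = y $ i * B $ i $ k * x $ k" by (simp add: mult_ac)
qed

lemma dotmv: "(\<Sum>i\<in>UNIV. ((G::'a::comm_semiring_1^'n^'m) *v x)$i * w$i) = (\<Sum>k\<in>UNIV. x$k * (transpose G *v w)$k)"
  unfolding matrix_vector_mult_def transpose_def
  apply (simp add: sum_distrib_left sum_distrib_right)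
  apply (subst sum.swap)
  apply (rule sum.cong[OF refl], rule sum.cong[OF refl])
  apply (simp add: mult_ac)
  done

lemma bform_mat: "bform B (G *v x) (G *v y) = bform (transpose G ** B ** G) x y"
  unfolding bform_alt dotmv
  by (simp add: matrix_vector_mul_assoc matrix_mul_assoc)

lemma sum_ifdelta: "(\<Sum>ka\<in>(UNIV::'n::finite set). f ka * (if ka = k then (1::'a::semiring_1) else 0)) = f k"
proof -
  have "(\<Sum>ka\<in>UNIV. f ka * (if ka = k then 1 else 0)) = (\<Sum>ka\<in>(UNIV::'n set). if ka = k then f ka else 0)"
    by (rule sum.cong) auto
  then show ?thesis by simp
qed

lemma sum_axis1: "(\<Sum>k\<in>UNIV. (axis j 1)$k * f k) = (f j::'a::comm_semiring_1)"
  using sum_ifdelta[of f j] by (simp add: axis_def mult.commute)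

lemma mv_axis: "((A::'a::semiring_1^'n^'m) *v axis k 1)$i = A$i$k"
  using sum_ifdelta[of "\<lambda>j. A$i$j" k] by (simp add: matrix_vector_mult_def axis_def)

lemma bform_axis: "bform B (axis i 1) (axis k 1) = B$i$k"
  by (simp add: bform_alt sum_axis1 mv_axis)

lemma bform_eq_matrix: assumes "\<And>x y. bform A x y = bform B x y" shows "A = B"
proof -
  have "A$i$k = B$i$k" for i k using bform_axis[of A i k] bform_axis[of B i k] assms by simp
  then show ?thesis by (simp add: vec_eq_iff)
qed

lemma imat_mult: "(imat (A ** B) :: 'a::ring_1^_^_) = imat A ** imat B"
  by (simp add: imat_def matrix_matrix_mult_def vec_eq_iff)
lemma imat_mv: "(ivec (A *v x) :: 'a::ring_1^_) = imat A *v ivec x"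
  by (simp add: imat_def ivec_def matrix_vector_mult_def vec_eq_iff)
lemma imat_transpose: "(imat (transpose A) :: 'a::ring_1^_^_) = transpose (imat A)"
  by (simp add: imat_def transpose_def vec_eq_iff)
lemma imat_one: "(imat (mat 1) :: 'a::ring_1^_^_) = mat 1"
  by (simp add: imat_def mat_def vec_eq_iff)
lemma bform_ivec: "bform (imat B) (ivec x) (ivec y) = (of_int (bform B x y) :: 'a::comm_ring_1)"
  by (simp add: bform_def imat_def ivec_def)

lemma bform_axis2: "bform B u (axis k 1) = (\<Sum>i\<in>UNIV. u$i * B$i$k)"
  unfolding bform_def axis_def
  apply (rule sum.cong[OF refl])
  by (simp add: sum_ifdelta[where f="\<lambda>ka. _ * B$_$ka"])

lemma nondeg:
  fixes B :: "'a::field^'n^'n"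
  assumes "det B \<noteq> 0" "\<And>v. bform B u v = 0"
  shows "u = 0"
proof -
  have "transpose B *v u = 0"
    using assms(2)[of "axis _ 1"] unfolding bform_axis2
    by (simp add: vec_eq_iff matrix_vector_mult_def transpose_def mult.commute)
  moreover have "invertible (transpose B)" using assms(1) by (simp add: invertible_det_nz)
  then obtain C where "C ** transpose B = mat 1" unfolding invertible_def by blast
  ultimately have "(C ** transpose B) *v u = 0" by (metis matrix_vector_mul_assoc matrix_vector_mult_0_right)
  then show ?thesis using \<open>C ** transpose B = mat 1\<close> by simp
qed

lemma linear_bform2: "linear (\<lambda>y. bform (B::real^'n^'n) x y)"
  by (rule linearI) (simp_all add: bform_add2 bform_scaleR2)
lemma linear_bform1: "linear (\<lambda>x. bform (B::real^'n^'n) x y)"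
  by (rule linearI) (simp_all add: bform_add1 bform_scaleR1)

lemma bform_sum1: "finite S \<Longrightarrow> bform B (sum f S) y = (\<Sum>s\<in>S. bform B (f s) y)"
  by (induction S rule: finite_induct) (simp_all add: bform_add1)

context
  fixes B :: "real^'n^'n"
  assumes symB: "transpose B = B"
begin

lemma refl_lin: "linear (reflection B v)"
  unfolding reflection_def
  by (rule linearI) (simp_all add: bform_add1 bform_scaleR1 add_divide_distrib scaleR_left_distrib
      algebra_simps)

lemma refl_iso: "bform B v v \<noteq> 0 \<Longrightarrow> bform B (reflection B v x) (reflection B v y) = bform B x y"
  unfolding reflection_def
  using bform_sym[OF symB, of v y]
  by (simp add: bform_diff1 bform_diff2 bform_scaleR1 bform_scaleR2 field_simps)

lemma refl_invol: "bform B v v \<noteq> 0 \<Longrightarrow> reflection B v (reflection B v x) = x"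
  unfolding reflection_def
  by (simp add: bform_diff1 bform_scaleR1 field_simps)

lemma refl_fix: "bform B x v = 0 \<Longrightarrow> reflection B v x = x"
  unfolding reflection_def by simp

lemma refl_minus: assumes a: "bform B x x = bform B y y" "bform B (x - y) (x - y) \<noteq> 0"
  shows "reflection B (x - y) y = x"
proof -
  have s: "bform B x y = bform B y x" using bform_sym[OF symB] .
  have c1: "bform B y (x - y) = bform B y x - bform B y y" by (simp add: bform_diff2)
  have c2: "bform B (x - y) (x - y) = 2 * (bform B y y - bform B y x)"
    using a s by (simp add: bform_diff1 bform_diff2)
  have "2 * bform B y (x - y) / bform B (x - y) (x - y) = -1"
    using a(2) unfolding c1 c2 by (simp add: field_simps)
  then show ?thesis unfolding reflection_def by (simp add: vec_eq_iff)
qed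

lemma refl_plus: assumes a: "bform B x x = bform B y y" "bform B (x + y) (x + y) \<noteq> 0"
  shows "reflection B (x + y) y = - x"
proof -
  have s: "bform B x y = bform B y x" using bform_sym[OF symB] .
  have c1: "bform B y (x + y) = bform B y x + bform B y y" by (simp add: bform_add2)
  have c2: "bform B (x + y) (x + y) = 2 * (bform B y y + bform B y x)"
    using a s by (simp add: bform_add1 bform_add2)
  have "2 * bform B y (x + y) / bform B (x + y) (x + y) = 1"
    using a(2) unfolding c1 c2 by (simp add: field_simps)
  then show ?thesis unfolding reflection_def by (simp add: vec_eq_iff)
qed

lemma refl_self: assumes "bform B x x \<noteq> 0" shows "reflection B x (- x) = x"
proof -
  have "2 * bform B (-x) x / bform B x x = -2" using assms by (simp add: bform_neg1)
  then show ?thesis unfolding reflection_def by (simp add: vec_eq_iff)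
qed

end

definition orthS :: "real^'n^'n \<Rightarrow> (real^'n) set \<Rightarrow> bool" where
  "orthS B S \<longleftrightarrow> (\<forall>e\<in>S. bform B e e \<noteq> 0) \<and> (\<forall>e\<in>S. \<forall>e'\<in>S. e \<noteq> e' \<longrightarrow> bform B e e' = 0)"

definition rprod :: "real^'n^'n \<Rightarrow> (real^'n) list \<Rightarrow> real^'n \<Rightarrow> real^'n" where
  "rprod B vs = foldr (\<lambda>v f. reflection B v \<circ> f) vs id"

lemma rprod_Cons: "rprod B (v # vs) = reflection B v \<circ> rprod B vs"
  by (simp add: rprod_def)

context
  fixes B :: "real^'n^'n"
  assumes symB: "transpose B = B" and detB: "det B \<noteq> 0"
begin

lemma orth_span: assumes "\<And>e. e \<in> S \<Longrightarrow> bform B x e = 0" "y \<in> span S"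
  shows "bform B x y = 0"
  using real_vector.linear_eq_0_on_span[OF linear_bform2 assms] .

lemma proj_orth: assumes "finite S" "orthS B S" "e0 \<in> S"
  shows "bform B (w - (\<Sum>e\<in>S. (bform B w e / bform B e e) *\<^sub>R e)) e0 = 0"
proof -
  have "bform B (\<Sum>e\<in>S. (bform B w e / bform B e e) *\<^sub>R e) e0
      = (\<Sum>e\<in>S. (bform B w e / bform B e e) * bform B e e0)"
    using assms(1) by (simp add: bform_sum1 bform_scaleR1)
  also have "\<dots> = (bform B w e0 / bform B e0 e0) * bform B e0 e0
       + (\<Sum>e\<in>S-{e0}. (bform B w e / bform B e e) * bform B e e0)"
    using assms(1,3) by (simp add: sum.remove)
  also have "(\<Sum>e\<in>S-{e0}. (bform B w e / bform B e e) * bform B e e0) = 0"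
    using assms(2,3) unfolding orthS_def by (intro sum.neutral) auto
  finally show ?thesis using assms(2,3) unfolding orthS_def by (simp add: bform_diff1)
qed

lemma exists_aniso:
  assumes fin: "finite S" and o: "orthS B S" and ns: "span S \<noteq> UNIV"
  shows "\<exists>x. bform B x x \<noteq> 0 \<and> (\<forall>e\<in>S. bform B x e = 0)"
proof (rule ccontr)
  assume H: "\<not> ?thesis"
  define P where "P w = w - (\<Sum>e\<in>S. (bform B w e / bform B e e) *\<^sub>R e)" for w
  have Porth: "\<And>w e. e \<in> S \<Longrightarrow> bform B (P w) e = 0" unfolding P_def using proj_orth[OF fin o] by blast
  obtain w where w: "w \<notin> span S" using ns by auto
  have Pw: "P w \<noteq> 0"
  proof
    assume "P w = 0"
    then have "w = (\<Sum>e\<in>S. (bform B w e / bform B e e) *\<^sub>R e)" unfolding P_def by simp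
    also have "\<dots> \<in> span S" by (intro span_sum span_mul span_base)
    finally show False using w by simp
  qed
  have iso: "\<And>u. (\<forall>e\<in>S. bform B u e = 0) \<Longrightarrow> bform B u u = 0" using H by blast
  have "bform B (P w) v = 0" for v
  proof -
    have v: "v = P v + (\<Sum>e\<in>S. (bform B v e / bform B e e) *\<^sub>R e)" unfolding P_def by simp
    have s2: "bform B (P w) (\<Sum>e\<in>S. (bform B v e / bform B e e) *\<^sub>R e) = 0"
      by (rule orth_span[OF _ span_sum[OF span_mul[OF span_base]]]) (auto intro: Porth)
    have a1: "bform B (P w) (P w) = 0" by (rule iso) (auto intro: Porth)
    have a2: "bform B (P v) (P v) = 0" by (rule iso) (auto intro: Porth)
    have a3: "bform B (P w + P v) (P w + P v) = 0"
      by (rule iso) (auto simp: bform_add1 Porth)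
    have "bform B (P w) (P v) = 0"
      using a1 a2 a3 bform_sym[OF symB, of "P w" "P v"] by (simp add: bform_add1 bform_add2)
    then show ?thesis using s2 by (subst v) (simp add: bform_add2)
  qed
  then have "P w = 0" by (rule nondeg[OF detB])
  then show False using Pw by simp
qed

lemma CD_aux:
  "\<And>S \<sigma>. m = CARD('n) - dim S \<Longrightarrow> finite S \<Longrightarrow> orthS B S \<Longrightarrow> linear \<sigma> \<Longrightarrow>
    (\<forall>x y. bform B (\<sigma> x) (\<sigma> y) = bform B x y) \<Longrightarrow> (\<forall>e\<in>S. \<sigma> e = e) \<Longrightarrow>
    \<exists>vs. (\<forall>v\<in>set vs. bform B v v \<noteq> 0) \<and> \<sigma> = rprod B vs"
proof (induction m rule: less_induct)
  case (less m S \<sigma>)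
  show ?case
  proof (cases "span S = UNIV")
    case True
    have "\<sigma> x = id x" for x
      using real_vector.linear_eq_on_span[of \<sigma> id S x] less.prems(4,6) True linear_id by auto
    then have "\<sigma> = rprod B []" by (auto simp: rprod_def)
    then show ?thesis by (intro exI[of _ "[]"]) simp
  next
    case False
    obtain x where x: "bform B x x \<noteq> 0" "\<forall>e\<in>S. bform B x e = 0"
      using exists_aniso[OF less.prems(2,3) False] by blast
    have xS: "x \<notin> span S" using orth_span[of S x x] x by auto
    then have xS': "x \<notin> S" using span_base by blast
    have dimI: "dim (insert x S) = dim S + 1" using xS by (simp add: dim_insert)
    have mlt: "CARD('n) - dim (insert x S) < m"
      using less.prems(1) dimI dim_subset_UNIV_cart[of "insert x S"] by linarith
    have fin: "finite (insert x S)" using less.prems(2) by simp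
    have eSx: "\<And>e. e \<in> S \<Longrightarrow> bform B e x = 0" using x(2) bform_sym[OF symB] by metis
    have oI: "orthS B (insert x S)"
      using less.prems(3) x eSx unfolding orthS_def by auto
    have IH: "\<And>\<tau>. linear \<tau> \<Longrightarrow> (\<forall>x y. bform B (\<tau> x) (\<tau> y) = bform B x y) \<Longrightarrow>
        \<tau> x = x \<Longrightarrow> (\<forall>e\<in>S. \<tau> e = e) \<Longrightarrow>
        \<exists>vs. (\<forall>v\<in>set vs. bform B v v \<noteq> 0) \<and> \<tau> = rprod B vs"
      using less.IH[OF mlt refl fin oI] by auto
    define y where "y = \<sigma> x"
    have yy: "bform B x x = bform B y y" using less.prems(5) y_def by simp
    have eS: "\<And>e. e \<in> S \<Longrightarrow> bform B e y = 0"
    proof -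
      fix e assume e: "e \<in> S"
      have "bform B e y = bform B (\<sigma> e) (\<sigma> x)" using less.prems(6) e y_def by simp
      also have "\<dots> = bform B e x" using less.prems(5) by simp
      also have "\<dots> = 0" using x(2) e bform_sym[OF symB, of e x] by simp
      finally show "bform B e y = 0" .
    qed
    show ?thesis
    proof (cases "y = x")
      case True
      then show ?thesis using IH[OF less.prems(4,5)] less.prems(6) y_def by auto
    next
      case yx: False
      have sum4: "bform B (x - y) (x - y) + bform B (x + y) (x + y) = 4 * bform B x x"
        using yy bform_sym[OF symB, of x y]
        by (simp add: bform_add1 bform_add2 bform_diff1 bform_diff2)
      show ?thesis
      proof (cases "bform B (x - y) (x - y) = 0")
        case False
        define z where "z = x - y"
        define \<tau> where "\<tau> = reflection B z \<circ> \<sigma>"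
        have lt: "linear \<tau>" unfolding \<tau>_def by (intro linear_compose less.prems(4) refl_lin[OF symB])
        have it: "\<forall>a b. bform B (\<tau> a) (\<tau> b) = bform B a b"
          unfolding \<tau>_def z_def using refl_iso[OF symB False] less.prems(5) by simp
        have tx: "\<tau> x = x" unfolding \<tau>_def z_def using refl_minus[OF symB yy False] y_def by simp
        have tS: "\<forall>e\<in>S. \<tau> e = e"
          unfolding \<tau>_def z_def using less.prems(6) eS eSx symB
          by (auto intro!: refl_fix simp: bform_diff2)
        obtain vs where vs: "\<forall>v\<in>set vs. bform B v v \<noteq> 0" "\<tau> = rprod B vs" using IH[OF lt it tx tS] by blast
        have "\<sigma> = reflection B z \<circ> \<tau>"
          unfolding \<tau>_def z_def using refl_invol[OF symB False] by (auto simp: fun_eq_iff)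
        then have "\<sigma> = rprod B (z # vs)" using vs by (simp add: rprod_Cons)
        then show ?thesis using vs False z_def by (intro exI[of _ "z # vs"]) auto
      next
        case True
        have z0: "bform B (x + y) (x + y) \<noteq> 0" using sum4 True x(1) by simp
        define z where "z = x + y"
        define \<tau> where "\<tau> = reflection B x \<circ> reflection B z \<circ> \<sigma>"
        have lt: "linear \<tau>" unfolding \<tau>_def by (intro linear_compose less.prems(4) refl_lin[OF symB])
        have it: "\<forall>a b. bform B (\<tau> a) (\<tau> b) = bform B a b"
          unfolding \<tau>_def z_def using refl_iso[OF symB z0] refl_iso[OF symB x(1)] less.prems(5) by simp
        have tx: "\<tau> x = x" unfolding \<tau>_def z_def
          using refl_plus[OF symB yy z0] refl_self[OF symB x(1)] y_def by simp
        have tS: "\<forall>e\<in>S. \<tau> e = e"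
          unfolding \<tau>_def z_def using less.prems(6) eS eSx
          by (simp add: refl_fix[OF symB] bform_add2)
        obtain vs where vs: "\<forall>v\<in>set vs. bform B v v \<noteq> 0" "\<tau> = rprod B vs" using IH[OF lt it tx tS] by blast
        have "\<sigma> = reflection B z \<circ> reflection B x \<circ> \<tau>"
          unfolding \<tau>_def z_def using refl_invol[OF symB z0] refl_invol[OF symB x(1)] by (auto simp: fun_eq_iff)
        then have "\<sigma> = rprod B (z # x # vs)" using vs by (simp add: rprod_Cons o_assoc)
        then show ?thesis using vs z0 x(1) z_def by (intro exI[of _ "z # x # vs"]) auto
      qed
    qed
  qed
qed

theorem cartan_dieudonne:
  fixes G :: "real^'n^'n"
  assumes "transpose G ** B ** G = B"
  shows "\<exists>vs. (\<forall>v\<in>set vs. bform B v v \<noteq> 0) \<and> (\<lambda>x. G *v x) = rprod B vs"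
  by (rule CD_aux[OF refl, of "{}"]) (auto simp: orthS_def bform_mat assms)

end

lemma det_imat: "det (imat A :: 'a::comm_ring_1^'n^'n) = of_int (det A)"
  by (simp add: det_def imat_def of_int_sum of_int_prod)

lemma imat_inj: "(imat A :: 'a::ring_char_0^'n^'m) = imat B \<Longrightarrow> A = B"
  by (simp add: imat_def vec_eq_iff)

lemma imat_mat: "(imat (mat c) :: 'a::ring_1^'n^'n) = mat (of_int c)"
  by (simp add: imat_def mat_def vec_eq_iff)

lemma mat_scale: "(A::'a::comm_ring_1^'n^'m) ** (\<chi> i j. c * C$i$j) = (\<chi> i j. c * (A ** C)$i$j)"
  by (simp add: matrix_matrix_mult_def vec_eq_iff sum_distrib_left mult_ac)
lemma mat_scale2: "(\<chi> i j. c * C$i$j) ** (A::'a::comm_ring_1^'n^'m) = (\<chi> i j. c * (C ** A)$i$j)"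
  by (simp add: matrix_matrix_mult_def vec_eq_iff sum_distrib_left mult_ac)

lemma common_denom:
  fixes A :: "int^'m^'m" assumes "det A \<noteq> 0"
  shows "\<exists>d D. d > 0 \<and> A ** D = mat d \<and> D ** A = mat d"
proof -
  define Aq where "Aq = (imat A :: rat^'m^'m)"
  have "det Aq \<noteq> 0" using assms by (simp add: Aq_def det_imat)
  then obtain C where C: "Aq ** C = mat 1" "C ** Aq = mat 1"
    by (auto simp: invertible_det_nz[symmetric] invertible_def)
  define den where "den p = snd (quotient_of (C $ fst p $ snd p))" for p
  define d where "d = (\<Prod>p\<in>(UNIV::('m\<times>'m) set). den p)"
  have dpos: "d > 0" unfolding d_def den_def by (intro prod_pos) (simp add: quotient_of_denom_pos')
  have int: "of_int d * C$i$j \<in> \<int>" for i j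
  proof -
    obtain n q where nq: "quotient_of (C$i$j) = (n, q)" by (cases "quotient_of (C$i$j)") auto
    have q: "q = den (i,j)" using nq by (simp add: den_def)
    have qpos: "q > 0" using nq quotient_of_denom_pos by blast
    have "q dvd d" unfolding d_def q by (rule dvd_prodI) auto
    then obtain r where r: "d = q * r" by blast
    have "of_int d * C$i$j = of_int (q * r) * (of_int n / of_int q)"
      using quotient_of_div[OF nq] r by simp
    also have "\<dots> = of_int (r * n)" using qpos by (simp add: field_simps)
    finally show ?thesis by simp
  qed
  define D :: "int^'m^'m" where "D = (\<chi> i j. \<lfloor>of_int d * C$i$j\<rfloor>)"
  have iD: "(imat D :: rat^'m^'m) = (\<chi> i j. of_int d * C$i$j)"
    using int by (simp add: imat_def D_def vec_eq_iff)
  have "(imat (A ** D) :: rat^'m^'m) = imat (mat d)"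
    by (simp add: imat_mult iD mat_scale Aq_def[symmetric] C imat_mat) (simp add: mat_def vec_eq_iff)
  moreover have "(imat (D ** A) :: rat^'m^'m) = imat (mat d)"
    by (simp add: imat_mult iD mat_scale2 Aq_def[symmetric] C imat_mat) (simp add: mat_def vec_eq_iff)
  ultimately show ?thesis using dpos imat_inj by blast
qed

lemma mat_smul: "mat c *v x = c *s (x::'a::comm_semiring_1^'n)"
  by (simp add: vec_eq_iff matrix_vector_mult_def mat_def if_distrib[where f="\<lambda>a. a * _"] cong: if_cong)
lemma mv_smul: "A *v (c *s x) = c *s (A *v (x::'a::comm_semiring_1^'n))"
  by (simp add: vec_eq_iff matrix_vector_mult_def sum_distrib_left mult_ac)
lemma smul_cancel: "(d::int) \<noteq> 0 \<Longrightarrow> d *s u = d *s v \<Longrightarrow> u = v"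
  by (simp add: vec_eq_iff)
lemma sum_axis: "(\<Sum>k\<in>UNIV. w$k * (axis j 1)$k) = (w$j::'a::semiring_1)"
  unfolding axis_def by (simp add: sum_ifdelta)

locale LL =
  fixes B :: "int^'n^'n" and J :: "int^'m^'n" and d e :: int and Dm :: "int^'m^'m" and Eb :: "int^'n^'n"
  assumes symB: "transpose B = B" and dpos: "d > 0" and epos: "e > 0"
    and Dm1: "(transpose J ** B ** J) ** Dm = mat d" and Dm2: "Dm ** (transpose J ** B ** J) = mat d"
    and Eb1: "Eb ** B = mat e"
begin

definition "NN = orth_compl B J"
definition "Q = J ** Dm ** transpose J ** B"
definition "P = mat d - Q"

lemma symBM: "transpose (transpose J ** B ** J) = transpose J ** B ** J"
  by (simp add: matrix_transpose_mul symB matrix_mul_assoc)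

lemma bform_J: "bform B x (J *v m) = (\<Sum>k\<in>UNIV. (transpose J *v (B *v x))$k * m$k)"
proof -
  have "bform B x (J *v m) = bform B (J *v m) x" by (rule bform_sym[OF symB])
  also have "\<dots> = (\<Sum>k\<in>UNIV. m$k * (transpose J *v (B *v x))$k)" unfolding bform_alt dotmv ..
  finally show ?thesis by (simp add: mult.commute)
qed

lemma NN_iff: "x \<in> NN \<longleftrightarrow> (\<forall>m. bform B x (J *v m) = 0)"
  by (simp add: NN_def orth_compl_def)

lemma NN_w: "x \<in> NN \<Longrightarrow> transpose J *v (B *v x) = 0"
  unfolding NN_iff vec_eq_iff
  by (metis bform_J sum_axis zero_index)

lemma NN_J: "x \<in> NN \<Longrightarrow> bform B x (J *v m) = 0" by (simp add: NN_iff)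
lemma NN_J2: "x \<in> NN \<Longrightarrow> bform B (J *v m) x = 0" using NN_J bform_sym[OF symB] by metis

lemma NN_add: "x \<in> NN \<Longrightarrow> y \<in> NN \<Longrightarrow> x + y \<in> NN" by (simp add: NN_iff bform_add1)
lemma NN_diff: "x \<in> NN \<Longrightarrow> y \<in> NN \<Longrightarrow> x - y \<in> NN" by (simp add: NN_iff bform_diff1)
lemma NN_neg: "x \<in> NN \<Longrightarrow> - x \<in> NN" by (simp add: NN_iff bform_neg1)
lemma NN_zero: "0 \<in> NN" by (simp add: NN_iff)
lemma NN_smul: "x \<in> NN \<Longrightarrow> c *s x \<in> NN" by (simp add: NN_iff bform_smult1)
lemma NN_sat: "c \<noteq> 0 \<Longrightarrow> c *s x \<in> NN \<Longrightarrow> x \<in> NN" by (simp add: NN_iff bform_smult1)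
lemma NN_sum: "(\<And>s. s \<in> S \<Longrightarrow> f s \<in> NN) \<Longrightarrow> sum f S \<in> NN"
  by (induction S rule: infinite_finite_induct) (auto simp: NN_zero NN_add)

lemma Q_range: "Q *v x = J *v (Dm *v (transpose J *v (B *v x)))"
  by (simp add: Q_def matrix_vector_mul_assoc matrix_mul_assoc)

lemma Q_J: "Q *v (J *v m) = d *s (J *v m)"
proof -
  have "Q ** J = J ** (Dm ** (transpose J ** B ** J))" by (simp add: Q_def matrix_mul_assoc)
  then have "Q ** J = J ** mat d" by (simp add: Dm2)
  then show ?thesis by (metis matrix_vector_mul_assoc mat_smul mv_smul)
qed

lemma Q_N: "x \<in> NN \<Longrightarrow> Q *v x = 0"
  by (metis Q_range NN_w matrix_vector_mult_0_right)

lemma PQ: "P *v x + Q *v x = d *s x"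
  by (simp add: P_def matrix_vector_mult_diff_rdistrib mat_smul)

lemma P_N: "x \<in> NN \<Longrightarrow> P *v x = d *s x"
  using PQ[of x] Q_N by simp

lemma P_J: "P *v (J *v m) = 0"
  using PQ[of "J *v m"] Q_J by simp

lemma P_in: "P *v x \<in> NN"
proof -
  define w where "w = transpose J *v (B *v x)"
  have "bform B (Q *v x) (J *v m) = d * bform B x (J *v m)" for m
  proof -
    have "bform B (Q *v x) (J *v m) = bform (transpose J ** B ** J) (Dm *v w) m"
      unfolding Q_range w_def[symmetric] bform_mat ..
    also have "\<dots> = bform (transpose J ** B ** J) m (Dm *v w)"
      by (rule bform_sym[OF symBM])
    also have "\<dots> = (\<Sum>i\<in>UNIV. m$i * (d *s w)$i)"
      unfolding bform_alt by (simp add: matrix_vector_mul_assoc Dm1 mat_smul)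
    also have "\<dots> = d * bform B x (J *v m)"
      unfolding bform_J w_def[symmetric] by (simp add: sum_distrib_left mult_ac)
    finally show ?thesis .
  qed
  moreover have "P *v x = d *s x - Q *v x" using PQ[of x] by (simp add: algebra_simps)
  ultimately show ?thesis by (simp add: NN_iff bform_diff1 bform_smult1)
qed

lemma QJ_range: "\<exists>u. Q *v x = J *v u" using Q_range by blast

end

context LL begin

definition "OG = O_sub B NN"

lemma OG_simps: "mult OG = compose NN" "one OG = restrict id NN"
  by (simp_all add: OG_def O_sub_def)

lemma carrier_OG: "f \<in> carrier OG \<longleftrightarrow> f \<in> extensional NN \<and> bij_betw f NN NN \<and>
  (\<forall>x\<in>NN. \<forall>y\<in>NN. f (x + y) = f x + f y) \<and> (\<forall>x\<in>NN. \<forall>y\<in>NN. bform B (f x) (f y) = bform B x y)"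
  by (simp add: OG_def O_sub_def)

context fixes f assumes fC: "f \<in> carrier OG"
begin

lemma f_all: "f \<in> extensional NN \<and> bij_betw f NN NN \<and>
  (\<forall>x\<in>NN. \<forall>y\<in>NN. f (x + y) = f x + f y) \<and> (\<forall>x\<in>NN. \<forall>y\<in>NN. bform B (f x) (f y) = bform B x y)"
  by (rule carrier_OG[THEN iffD1, OF fC])
lemma f_ext: "f \<in> extensional NN" using f_all by (rule conjunct1)
lemma f_bij: "bij_betw f NN NN" using f_all by (simp only:)
lemma f_in: "x \<in> NN \<Longrightarrow> f x \<in> NN" using f_bij by (rule bij_betw_apply)
lemma f_add: "x \<in> NN \<Longrightarrow> y \<in> NN \<Longrightarrow> f (x + y) = f x + f y" using f_all by (simp only:)
lemma f_iso: "x \<in> NN \<Longrightarrow> y \<in> NN \<Longrightarrow> bform B (f x) (f y) = bform B x y" using f_all by (simp only:)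
lemma f_zero: "f 0 = 0"
  using f_add[OF NN_zero NN_zero] by simp
lemma f_neg: assumes a: "x \<in> NN" shows "f (- x) = - f x"
proof -
  have "f x + f (- x) = 0" using f_add[OF a NN_neg[OF a]] f_zero by simp
  from minus_unique[OF this] show ?thesis by simp
qed
lemma f_diff: assumes a: "x \<in> NN" and b: "y \<in> NN" shows "f (x - y) = f x - f y"
proof -
  have "f (x + - y) = f x + f (- y)" by (rule f_add[OF a NN_neg[OF b]])
  then show ?thesis using f_neg[OF b] by simp
qed
lemma f_nat: "x \<in> NN \<Longrightarrow> f (of_nat n *s x) = of_nat n *s f x"
proof (induction n)
  case 0 then show ?case using f_zero by (simp add: vec_eq_iff)
next
  case (Suc n)
  have "of_nat (Suc n) *s x = x + of_nat n *s x" by (simp add: vec_eq_iff algebra_simps)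
  moreover have "of_nat (Suc n) *s f x = f x + of_nat n *s f x" by (simp add: vec_eq_iff algebra_simps)
  ultimately show ?case using Suc f_add[OF Suc.prems NN_smul[OF Suc.prems]] by simp
qed
lemma f_smul: assumes "x \<in> NN" shows "f (c *s x) = c *s f x"
proof (cases "c \<ge> 0")
  case True
  then show ?thesis using f_nat[OF assms, of "nat c"] by simp
next
  case False
  define n where "n = nat (- c)"
  have c: "c = - int n" using False n_def by simp
  have "c *s x = - (int n *s x)" "c *s f x = - (int n *s f x)"
    unfolding c by (simp_all add: vec_eq_iff)
  then show ?thesis using f_neg[OF NN_smul[OF assms]] f_nat[OF assms, of n] by simp
qed
lemma f_sum: "(\<And>s. s \<in> S \<Longrightarrow> g s \<in> NN) \<Longrightarrow> f (sum g S) = (\<Sum>s\<in>S. f (g s))"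
proof (induction S rule: infinite_finite_induct)
  case (infinite A)
  then show ?case using f_zero by simp
next
  case empty
  then show ?case using f_zero by simp
next
  case (insert x F)
  have "f (sum g (insert x F)) = f (g x + sum g F)" using insert.hyps by simp
  also have "\<dots> = f (g x) + f (sum g F)"
  proof -
    have gx: "g x \<in> NN" using insert.prems by simp
    have sF: "sum g F \<in> NN" using insert.prems by (simp add: NN_sum)
    show ?thesis by (rule f_add[OF gx sF])
  qed
  also have "f (sum g F) = (\<Sum>s\<in>F. f (g s))" using insert.IH insert.prems by auto
  finally show ?case using insert.hyps by simp
qed

end

lemma OG_closed: assumes f: "f \<in> carrier OG" and g: "g \<in> carrier OG" shows "compose NN f g \<in> carrier OG"
  unfolding carrier_OG
proof (intro conjI)
  show "compose NN f g \<in> extensional NN" by (simp add: compose_def)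
  have "bij_betw (f \<circ> g) NN NN" using bij_betw_trans[OF f_bij[OF g] f_bij[OF f]] .
  then show "bij_betw (compose NN f g) NN NN"
    by (rule bij_betw_cong[THEN iffD1, rotated]) (simp add: compose_def)
  show "\<forall>x\<in>NN. \<forall>y\<in>NN. compose NN f g (x + y) = compose NN f g x + compose NN f g y"
  proof (intro ballI)
    fix x y assume xy: "x \<in> NN" "y \<in> NN"
    then have "x + y \<in> NN" by (rule NN_add)
    then show "compose NN f g (x + y) = compose NN f g x + compose NN f g y"
      using xy f_add[OF f] f_add[OF g] f_in[OF g] by (simp add: compose_def)
  qed
  show "\<forall>x\<in>NN. \<forall>y\<in>NN. bform B (compose NN f g x) (compose NN f g y) = bform B x y"
    using f_iso[OF f] f_iso[OF g] f_in[OF g] by (simp add: compose_def)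
qed

lemma OG_one: "restrict id NN \<in> carrier OG"
  unfolding carrier_OG by (auto simp: bij_betw_def inj_on_def NN_add)

definition "finv f = restrict (inv_into NN f) NN"

lemma finv_C: assumes f: "f \<in> carrier OG" shows "finv f \<in> carrier OG"
proof -
  have inj: "inj_on f NN" using f_bij[OF f] bij_betw_def by blast
  have fi: "\<And>x. x \<in> NN \<Longrightarrow> f (inv_into NN f x) = x" "\<And>x. x \<in> NN \<Longrightarrow> inv_into NN f x \<in> NN"
    using f_bij[OF f] by (auto simp: bij_betw_def f_inv_into_f inv_into_into)
  have ii: "\<And>x. x \<in> NN \<Longrightarrow> inv_into NN f (f x) = x" using inv_into_f_f[OF inj] by blast
  show ?thesis unfolding carrier_OG finv_def
  proof (intro conjI ballI)
    show "bij_betw (restrict (inv_into NN f) NN) NN NN"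
      using bij_betw_inv_into[OF f_bij[OF f]] by (rule bij_betw_cong[THEN iffD1, rotated]) simp
    fix x y assume xy: "x \<in> NN" "y \<in> NN"
    have "f (inv_into NN f x + inv_into NN f y) = x + y" using xy fi f_add[OF f] by simp
    then have "inv_into NN f (x + y) = inv_into NN f x + inv_into NN f y"
      using ii[of "inv_into NN f x + inv_into NN f y"] fi xy NN_add by metis
    then show "restrict (inv_into NN f) NN (x + y) = restrict (inv_into NN f) NN x + restrict (inv_into NN f) NN y"
      using xy NN_add by simp
    show "bform B (restrict (inv_into NN f) NN x) (restrict (inv_into NN f) NN y) = bform B x y"
      using xy fi f_iso[OF f, of "inv_into NN f x" "inv_into NN f y"] by simp
  qed simp
qed

lemma finv_l: assumes f: "f \<in> carrier OG" shows "compose NN (finv f) f = restrict id NN"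
proof -
  have inj: "inj_on f NN" using f_bij[OF f] bij_betw_def by blast
  show ?thesis unfolding finv_def compose_def
    using inv_into_f_f[OF inj] f_in[OF f] by (auto simp: fun_eq_iff)
qed

lemma finv_r: assumes f: "f \<in> carrier OG" shows "compose NN f (finv f) = restrict id NN"
  unfolding finv_def compose_def
  using f_bij[OF f] by (auto simp: fun_eq_iff bij_betw_def f_inv_into_f)

lemma OG_group: "group OG"
proof (rule groupI)
  show "x \<otimes>\<^bsub>OG\<^esub> y \<in> carrier OG" if "x \<in> carrier OG" "y \<in> carrier OG" for x y
    using OG_closed that by (simp add: OG_simps)
  show "\<one>\<^bsub>OG\<^esub> \<in> carrier OG" using OG_one by (simp add: OG_simps)
  show "x \<otimes>\<^bsub>OG\<^esub> y \<otimes>\<^bsub>OG\<^esub> z = x \<otimes>\<^bsub>OG\<^esub> (y \<otimes>\<^bsub>OG\<^esub> z)"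
    if "x \<in> carrier OG" "y \<in> carrier OG" "z \<in> carrier OG" for x y z
    using compose_assoc[where f=z and h=x and g=y and A=NN and B=NN] f_in[OF that(3)] by (simp add: OG_simps Pi_iff)
  show "\<one>\<^bsub>OG\<^esub> \<otimes>\<^bsub>OG\<^esub> x = x" if "x \<in> carrier OG" for x
  proof -
    have "compose NN (restrict id NN) x t = x t" for t
      using f_in[OF that] f_ext[OF that] by (cases "t \<in> NN") (simp_all add: compose_def extensional_def)
    then show ?thesis by (simp add: OG_simps fun_eq_iff)
  qed
  show "\<exists>y\<in>carrier OG. y \<otimes>\<^bsub>OG\<^esub> x = \<one>\<^bsub>OG\<^esub>" if "x \<in> carrier OG" for x
    using finv_C[OF that] finv_l[OF that] by (auto simp: OG_simps)
qed

lemma OG_inv: "f \<in> carrier OG \<Longrightarrow> inv\<^bsub>OG\<^esub> f = finv f"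
  using group.inv_equality[OF OG_group, of "finv f" f] finv_C finv_l by (simp add: OG_simps)

end

lemma col_axis: "column j A = (A::'a::semiring_1^'c^'d) *v axis j 1"
  by (simp add: vec_eq_iff column_def mv_axis)

context LL begin

definition Fm :: "(int^'n \<Rightarrow> int^'n) \<Rightarrow> int^'n^'n" where
  "Fm f = (\<chi> i j. (f (P *v axis j 1))$i)"

lemma Fm_mv: assumes f: "f \<in> carrier OG" shows "Fm f *v x = f (P *v x)"
proof -
  have "Fm f *v x = (\<Sum>j\<in>UNIV. x$j *s f (P *v axis j 1))"
    by (subst matrix_mult_sum) (simp add: column_def Fm_def)
  also have "\<dots> = (\<Sum>j\<in>UNIV. f (x$j *s (P *v axis j 1)))"
    using f_smul[OF f P_in] by simp
  also have "\<dots> = f (\<Sum>j\<in>UNIV. x$j *s (P *v axis j 1))"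
    by (rule f_sum[OF f, symmetric]) (simp add: NN_smul P_in)
  also have "(\<Sum>j\<in>UNIV. x$j *s (P *v axis j 1)) = P *v x"
  proof -
    have "(\<Sum>j\<in>UNIV. x$j *s (P *v axis j 1)) = (\<Sum>j\<in>UNIV. x$j *s column j P)" by (simp only: col_axis)
    then show ?thesis using matrix_mult_sum[of P x] by simp
  qed
  finally show ?thesis .
qed

definition "kcong k f \<longleftrightarrow> (\<forall>w\<in>NN. \<exists>z. f w - w = k *s z)"

definition Rm :: "(int^'n \<Rightarrow> int^'n) \<Rightarrow> int^'n^'n" where
  "Rm f = (\<chi> i j. (Fm f - P)$i$j div (d*e))"

definition Ext :: "(int^'n \<Rightarrow> int^'n) \<Rightarrow> int^'n^'n" where
  "Ext f = mat 1 + (\<chi> i j. e * Rm f$i$j)"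

lemma de_nz: "d * e \<noteq> 0" using dpos epos by simp

context fixes f assumes fC: "f \<in> carrier OG" and fk: "kcong (d*e) f"
begin

lemma Rm_exact: "(d*e) * Rm f$i$j = (Fm f - P)$i$j"
proof -
  have w: "P *v axis j 1 \<in> NN" by (rule P_in)
  obtain z where z: "f (P *v axis j 1) - P *v axis j 1 = (d*e) *s z"
    using fk w unfolding kcong_def by blast
  have "(Fm f - P)$i$j = (f (P *v axis j 1) - P *v axis j 1)$i"
    by (simp add: Fm_def mv_axis)
  also have "\<dots> = (d*e) * z$i" using z by simp
  finally show ?thesis using de_nz by (simp add: Rm_def)
qed

lemma Ext_d: "d *s (Ext f *v x) = f (P *v x) + Q *v x"
proof -
  define Y where "Y = (\<chi> i j. e * Rm f$i$j) *v x"
  have A: "Ext f *v x = x + Y"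
    by (simp add: Ext_def Y_def matrix_vector_mult_add_rdistrib)
  have B: "d *s Y = (Fm f - P) *v x"
  proof -
    have "(d *s Y)$i = ((Fm f - P) *v x)$i" for i
    proof -
      have "(d *s Y)$i = (\<Sum>j\<in>UNIV. ((d*e) * Rm f$i$j) * x$j)"
        by (simp add: Y_def matrix_vector_mult_def sum_distrib_left mult_ac)
      also have "\<dots> = ((Fm f - P) *v x)$i"
        by (simp add: Rm_exact matrix_vector_mult_def)
      finally show ?thesis .
    qed
    then show ?thesis by (simp add: vec_eq_iff)
  qed
  have C: "(Fm f - P) *v x = f (P *v x) - P *v x"
    by (simp add: matrix_vector_mult_diff_rdistrib Fm_mv[OF fC])
  have "d *s (Ext f *v x) = d *s x + d *s Y" unfolding A by (simp add: vec_eq_iff algebra_simps)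
  also have "\<dots> = (P *v x + Q *v x) + (f (P *v x) - P *v x)" unfolding B C PQ ..
  finally show ?thesis by (simp add: algebra_simps)
qed

lemma Ext_N: assumes w: "w \<in> NN" shows "Ext f *v w = f w"
proof (rule smul_cancel[of d])
  show "d \<noteq> 0" using dpos by simp
  have "d *s (Ext f *v w) = f (P *v w) + Q *v w" by (rule Ext_d)
  also have "\<dots> = f (d *s w)" using P_N[OF w] Q_N[OF w] by simp
  also have "\<dots> = d *s f w" by (rule f_smul[OF fC w])
  finally show "d *s (Ext f *v w) = d *s f w" .
qed

lemma Ext_J: "Ext f *v (J *v m) = J *v m"
proof (rule smul_cancel[of d])
  show "d \<noteq> 0" using dpos by simp
  have "d *s (Ext f *v (J *v m)) = f (P *v (J *v m)) + Q *v (J *v m)" by (rule Ext_d)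
  also have "\<dots> = d *s (J *v m)" unfolding P_J Q_J f_zero[OF fC] by simp
  finally show "d *s (Ext f *v (J *v m)) = d *s (J *v m)" .
qed

lemma Ext_Q: "Ext f *v (Q *v x) = Q *v x"
  using QJ_range[of x] Ext_J by auto

lemma Ext_iso: "transpose (Ext f) ** B ** Ext f = B"
proof (rule bform_eq_matrix)
  fix x y
  obtain ux where ux: "Q *v x = J *v ux" using QJ_range by blast
  obtain uy where uy: "Q *v y = J *v uy" using QJ_range by blast
  have Qy: "bform B (f (P *v x)) (Q *v y) = 0"
    unfolding uy by (rule NN_J[OF f_in[OF fC P_in]])
  have Qx: "bform B (Q *v x) (f (P *v y)) = 0"
    unfolding ux by (rule NN_J2[OF f_in[OF fC P_in]])
  have Qy': "bform B (P *v x) (Q *v y) = 0"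
    unfolding uy by (rule NN_J[OF P_in])
  have Qx': "bform B (Q *v x) (P *v y) = 0"
    unfolding ux by (rule NN_J2[OF P_in])
  have "d * d * bform B (Ext f *v x) (Ext f *v y) = bform B (d *s (Ext f *v x)) (d *s (Ext f *v y))"
    by (simp add: bform_smult1 bform_smult2)
  also have "\<dots> = bform B (P *v x) (P *v y) + bform B (Q *v x) (Q *v y)"
    unfolding Ext_d using Qy Qx f_iso[OF fC P_in P_in]
    by (simp add: bform_add1 bform_add2)
  also have "\<dots> = bform B (d *s x) (d *s y)"
    unfolding PQ[symmetric] using Qy' Qx' by (simp add: bform_add1 bform_add2)
  also have "\<dots> = d * d * bform B x y" by (simp add: bform_smult1 bform_smult2)
  finally have "bform B (Ext f *v x) (Ext f *v y) = bform B x y" using dpos by simp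
  then show "bform (transpose (Ext f) ** B ** Ext f) x y = bform B x y"
    by (simp add: bform_mat)
qed

end

lemma kcong_one: "kcong k (restrict id NN)"
  unfolding kcong_def by (intro ballI exI[of _ 0]) (simp add: vec_eq_iff)

lemma kcong_mult: assumes "f \<in> carrier OG" "g \<in> carrier OG" "kcong k f" "kcong k g"
  shows "kcong k (compose NN f g)"
  unfolding kcong_def
proof
  fix w assume w: "w \<in> NN"
  obtain z1 where z1: "g w - w = k *s z1" using assms(4) w unfolding kcong_def by blast
  obtain z2 where z2: "f (g w) - g w = k *s z2" using assms(3) f_in[OF assms(2) w] unfolding kcong_def by blast
  have "compose NN f g w - w = (f (g w) - g w) + (g w - w)" using w by (simp add: compose_def)
  also have "\<dots> = k *s (z2 + z1)" unfolding z1 z2 by (simp add: vec_eq_iff algebra_simps)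
  finally show "\<exists>z. compose NN f g w - w = k *s z" by blast
qed

lemma kcong_inv: assumes f: "f \<in> carrier OG" "kcong k f" shows "kcong k (finv f)"
  unfolding kcong_def
proof
  fix w assume w: "w \<in> NN"
  define w' where "w' = finv f w"
  have w'1: "w' \<in> NN" unfolding w'_def by (rule f_in[OF finv_C[OF f(1)] w])
  have "compose NN f (finv f) w = restrict id NN w" by (simp add: finv_r[OF f(1)])
  then have w'2: "f w' = w" using w by (simp add: compose_def w'_def)
  obtain z where z: "f w' - w' = k *s z" using f(2) w'1 unfolding kcong_def by blast
  have "finv f w - w = - (f w' - w')" unfolding w'_def[symmetric] w'2 by simp
  also have "\<dots> = k *s (- z)" unfolding z by (simp add: vec_eq_iff)
  finally have "finv f w - w = k *s (- z)" .
  then show "\<exists>z. finv f w - w = k *s z" by blast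
qed

lemma Ext_one: "Ext (restrict id NN) = mat 1"
proof -
  have "Ext (restrict id NN) *v x = mat 1 *v x" for x
  proof (rule smul_cancel[of d])
    show "d \<noteq> 0" using dpos by simp
    have "d *s (Ext (restrict id NN) *v x) = restrict id NN (P *v x) + Q *v x"
      by (rule Ext_d[OF OG_one kcong_one])
    also have "\<dots> = d *s x" using P_in[of x] PQ[of x] by simp
    finally show "d *s (Ext (restrict id NN) *v x) = d *s (mat 1 *v x)" by simp
  qed
  then show ?thesis by (simp add: matrix_eq)
qed

lemma Ext_mult: assumes "f \<in> carrier OG" "g \<in> carrier OG" "kcong (d*e) f" "kcong (d*e) g"
  shows "Ext (compose NN f g) = Ext f ** Ext g"
proof -
  have fg: "compose NN f g \<in> carrier OG" "kcong (d*e) (compose NN f g)"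
    using OG_closed kcong_mult assms by auto
  have "Ext (compose NN f g) *v x = Ext f *v (Ext g *v x)" for x
  proof (rule smul_cancel[of d])
    show "d \<noteq> 0" using dpos by simp
    have "d *s (Ext f *v (Ext g *v x)) = Ext f *v (d *s (Ext g *v x))"
      by (rule mv_smul[symmetric])
    also have "\<dots> = Ext f *v (g (P *v x) + Q *v x)"
      by (simp only: Ext_d[OF assms(2,4)])
    also have "\<dots> = f (g (P *v x)) + Q *v x"
      by (simp add: matrix_vector_right_distrib Ext_N[OF assms(1,3)] f_in[OF assms(2) P_in] Ext_Q[OF assms(1,3)])
    also have "\<dots> = d *s (Ext (compose NN f g) *v x)"
    proof -
      have "d *s (Ext (compose NN f g) *v x) = compose NN f g (P *v x) + Q *v x" by (rule Ext_d[OF fg])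
      moreover have "compose NN f g (P *v x) = f (g (P *v x))" by (simp add: compose_def P_in)
      ultimately show ?thesis by simp
    qed
    finally show "d *s (Ext (compose NN f g) *v x) = d *s (Ext f *v (Ext g *v x))" by simp
  qed
  then show ?thesis by (simp add: matrix_eq matrix_vector_mul_assoc)
qed

end

lemma CD_int:
  fixes B g :: "int^'n^'n"
  assumes "transpose B = B" "det B \<noteq> 0" "transpose g ** B ** g = B"
  shows "\<exists>vs. (\<forall>v\<in>set vs. bform (imat B) v v \<noteq> 0) \<and> (\<lambda>x. (imat g :: real^'n^'n) *v x) = rprod (imat B) vs"
proof (rule cartan_dieudonne)
  show "transpose (imat B :: real^'n^'n) = imat B" using assms(1) by (simp add: imat_transpose[symmetric])
  show "det (imat B :: real^'n^'n) \<noteq> 0" using assms(2) by (simp add: det_imat)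
  show "transpose (imat g) ** (imat B :: real^'n^'n) ** imat g = imat B"
    using assms(3) by (simp add: imat_transpose[symmetric] imat_mult[symmetric])
qed

lemma finite_bounded_mats: "finite S \<Longrightarrow> finite {M::'a^'n^'m. \<forall>i j. M$i$j \<in> S}"
proof -
  assume S: "finite S"
  have "{M::'a^'n^'m. \<forall>i j. M$i$j \<in> S} \<subseteq> (\<lambda>F. \<chi> i j. F i j) ` (PiE UNIV (\<lambda>i. PiE UNIV (\<lambda>j. S)))"
  proof
    fix M :: "'a^'n^'m" assume "M \<in> {M. \<forall>i j. M$i$j \<in> S}"
    then have "(\<lambda>i j. M$i$j) \<in> PiE UNIV (\<lambda>i. PiE UNIV (\<lambda>j. S))" by auto
    then show "M \<in> (\<lambda>F. \<chi> i j. F i j) ` (PiE UNIV (\<lambda>i. PiE UNIV (\<lambda>j. S)))"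
      by (rule rev_image_eqI) (simp add: vec_eq_iff)
  qed
  moreover have "finite (PiE (UNIV::'m set) (\<lambda>i. PiE (UNIV::'n set) (\<lambda>j. S)))"
    using S by (intro finite_PiE) auto
  ultimately show ?thesis by (rule finite_subset[OF _ finite_imageI])
qed

context LL begin

lemma symE: "B$i$k = B$k$i"
proof -
  have "transpose B $ k $ i = B $ i $ k" by (simp add: transpose_def)
  then show ?thesis using symB by simp
qed

lemma Ext_disc: assumes fC: "f \<in> carrier OG" and fk: "kcong (d*e) f"
  shows "trivial_on_discr B (Ext f)"
  unfolding trivial_on_discr_def
proof (intro allI impI)
  fix y :: "rat^'n" assume H: "\<forall>x::int^'n. bform (imat B) y (ivec x) \<in> \<int>"
  have Hk: "(imat B *v y)$k \<in> \<int>" for k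
  proof -
    have ivax: "(ivec (axis k 1) :: rat^'n) = axis k 1" by (simp add: ivec_def axis_def vec_eq_iff)
    have "bform (imat B) y (ivec (axis k 1)) = (imat B *v y)$k"
      unfolding ivax bform_axis2 by (simp add: matrix_vector_mult_def imat_def symE mult.commute)
    moreover have "bform (imat B) y (ivec (axis k 1)) \<in> \<int>" using H by blast
    ultimately show ?thesis by simp
  qed
  define z where "z = (\<chi> k. \<lfloor>(imat B *v y)$k\<rfloor>)"
  have zB: "(ivec z :: rat^'n) = imat B *v y"
  proof -
    have "of_int \<lfloor>(imat B *v y)$k\<rfloor> = (imat B *v y)$k" for k
      using Hk[of k] by (auto elim!: Ints_cases)
    then show ?thesis by (simp add: vec_eq_iff z_def ivec_def)
  qed
  have ey: "of_int e *s y = (ivec (Eb *v z) :: rat^'n)"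
  proof -
    have "(ivec (Eb *v z) :: rat^'n) = imat Eb *v (imat B *v y)" by (simp add: imat_mv zB)
    also have "\<dots> = imat (Eb ** B) *v y" by (simp add: imat_mult matrix_vector_mul_assoc)
    also have "\<dots> = of_int e *s y" by (simp add: Eb1 imat_mat mat_smul)
    finally show ?thesis by simp
  qed
  have E1: "(imat (Ext f) :: rat^'n^'n) = mat 1 + imat (\<chi> i j. e * Rm f$i$j)"
    by (simp add: Ext_def imat_def vec_eq_iff mat_def)
  have E2: "(imat (\<chi> i j. e * Rm f$i$j) :: rat^'n^'n) *v y = imat (Rm f) *v (of_int e *s y)"
    by (simp add: imat_def matrix_vector_mult_def vec_eq_iff sum_distrib_left mult_ac)
  have "imat (Ext f) *v y - y = ivec (Rm f *v (Eb *v z))"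
    unfolding E1 by (simp add: matrix_vector_mult_add_rdistrib E2 ey imat_mv)
  then show "\<exists>z. imat (Ext f) *v y - y = ivec z" by blast
qed

lemma Ext_inv: assumes "f \<in> carrier OG" "kcong (d*e) f"
  shows "Ext f ** Ext (finv f) = mat 1" "Ext (finv f) ** Ext f = mat 1"
proof -
  have i: "finv f \<in> carrier OG" "kcong (d*e) (finv f)" using finv_C kcong_inv assms by auto
  have "Ext f ** Ext (finv f) = Ext (compose NN f (finv f))"
    by (rule Ext_mult[OF assms(1) i(1) assms(2) i(2), symmetric])
  also have "\<dots> = Ext (restrict id NN)" by (simp only: finv_r[OF assms(1)])
  finally show "Ext f ** Ext (finv f) = mat 1" by (simp only: Ext_one)
  have "Ext (finv f) ** Ext f = Ext (compose NN (finv f) f)"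
    by (rule Ext_mult[OF i(1) assms(1) i(2) assms(2), symmetric])
  also have "\<dots> = Ext (restrict id NN)" by (simp only: finv_l[OF assms(1)])
  finally show "Ext (finv f) ** Ext f = mat 1" by (simp only: Ext_one)
qed

lemma Ext_OL: assumes "f \<in> carrier OG" "kcong (d*e) f" shows "Ext f \<in> O_L B"
  unfolding O_L_def mem_Collect_eq
  by (intro conjI exI[of _ "Ext (finv f)"] Ext_inv[OF assms] Ext_iso[OF assms])

lemma Ext_det: assumes "f \<in> carrier OG" "kcong (d*e) f" shows "det (Ext f) = 1 \<or> det (Ext f) = -1"
proof -
  have "det (Ext f) * det (Ext (finv f)) = 1"
    using det_mul[of "Ext f" "Ext (finv f)"] Ext_inv(1)[OF assms] by simp
  then show ?thesis unfolding zmult_eq_1_iff by blast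
qed

definition resid :: "(int^'n \<Rightarrow> int^'n) \<Rightarrow> int^'n^'n" where
  "resid f = (\<chi> i j. (Fm f)$i$j mod (d*d*e))"

lemma resid_range: "resid f \<in> {M. \<forall>i j. M$i$j \<in> {0..<d*d*e}}"
proof -
  have p: "d*d*e > 0" using dpos epos by simp
  show ?thesis unfolding resid_def using pos_mod_bound[OF p] pos_mod_sign[OF p] by simp
qed

lemma resid_cong: assumes f: "f \<in> carrier OG" and g: "g \<in> carrier OG" and r: "resid f = resid g"
  shows "kcong (d*e) (compose NN f (finv g))"
  unfolding kcong_def
proof
  fix w assume w: "w \<in> NN"
  define x where "x = finv g w"
  have x: "x \<in> NN" unfolding x_def by (rule f_in[OF finv_C[OF g] w])
  have "compose NN g (finv g) w = restrict id NN w" by (simp add: finv_r[OF g])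
  then have gx: "g x = w" using w by (simp add: compose_def x_def)
  have c: "compose NN f (finv g) w = f x" using w by (simp add: compose_def x_def)
  define W where "W = (\<chi> i j. (Fm f - Fm g)$i$j div (d*d*e))"
  have Wd: "(Fm f - Fm g)$i$j = (d*d*e) * W$i$j" for i j
  proof -
    have "resid f $ i $ j = resid g $ i $ j" using r by simp
    then have "(Fm f)$i$j mod (d*d*e) = (Fm g)$i$j mod (d*d*e)" unfolding resid_def by simp
    then have "(d*d*e) dvd (Fm f - Fm g)$i$j" unfolding mod_eq_dvd_iff by simp
    then show ?thesis unfolding W_def by (simp only: vec_lambda_beta dvd_mult_div_cancel)
  qed
  have FW: "Fm f - Fm g = (\<chi> i j. (d*d*e) * W$i$j)" using Wd by (simp only: vec_eq_iff vec_lambda_beta) simp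
  have "d *s (f x - g x) = d *s f x - d *s g x" by (simp add: vec_eq_iff algebra_simps)
  also have "\<dots> = f (P *v x) - g (P *v x)"
    unfolding P_N[OF x] f_smul[OF f x, of d] f_smul[OF g x, of d] ..
  also have "\<dots> = (Fm f - Fm g) *v x" by (simp add: matrix_vector_mult_diff_rdistrib Fm_mv f g)
  also have "\<dots> = d *s ((d*e) *s (W *v x))"
    unfolding FW by (simp add: vec_eq_iff matrix_vector_mult_def sum_distrib_left mult_ac)
  finally have eq: "d *s (f x - g x) = d *s ((d*e) *s (W *v x))" .
  have "f x - g x = (d*e) *s (W *v x)" by (rule smul_cancel[OF _ eq]) (use dpos in simp)
  moreover have "compose NN f (finv g) w - w = f x - g x" using c gx by simp
  ultimately show "\<exists>z. compose NN f (finv g) w - w = (d*e) *s z" by metis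
qed

end

lemma rprod_append: "rprod B (xs @ ys) = rprod B xs \<circ> rprod B ys"
  by (induction xs) (simp_all add: rprod_def)

lemma rprod_rev: assumes "transpose B = B" "\<forall>v\<in>set vs. bform B v v \<noteq> 0"
  shows "rprod B (rev vs) \<circ> rprod B vs = id"
  using assms(2)
proof (induction vs)
  case Nil then show ?case by (simp add: rprod_def)
next
  case (Cons v vs)
  have r1: "rprod B [v] = reflection B v" by (simp add: rprod_def)
  have "rprod B (rev (v # vs)) = rprod B (rev vs) \<circ> reflection B v" by (simp add: rprod_append r1)
  then have "rprod B (rev (v # vs)) \<circ> rprod B (v # vs) = rprod B (rev vs) \<circ> (reflection B v \<circ> reflection B v) \<circ> rprod B vs"
    by (simp add: rprod_Cons o_assoc)
  also have "reflection B v \<circ> reflection B v = id"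
    using refl_invol[OF assms(1)] Cons.prems by (auto simp: fun_eq_iff)
  finally show ?case using Cons by simp
qed

context LL begin

definition res :: "int^'n^'n \<Rightarrow> (int^'n \<Rightarrow> int^'n)" where
  "res g = restrict (\<lambda>x. g *v x) NN"

lemma Gamma_eq: "Gamma B J Mo = res ` Mo_fix Mo J"
  by (simp add: Gamma_def res_def NN_def)

lemma OL_N: assumes "g \<in> O_L B" "\<forall>m. g *v (J *v m) = J *v m" "x \<in> NN" shows "g *v x \<in> NN"
proof -
  have iso: "transpose g ** B ** g = B" using assms(1) by (simp add: O_L_def)
  have "bform B (g *v x) (J *v m) = 0" for m
  proof -
    have "bform B (g *v x) (J *v m) = bform B (g *v x) (g *v (J *v m))" using assms(2) by simp
    also have "\<dots> = bform B x (J *v m)" by (simp add: bform_mat iso)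
    finally show ?thesis using NN_J[OF assms(3)] by simp
  qed
  then show ?thesis by (simp add: NN_iff)
qed

lemma OL_iso: "g \<in> O_L B \<Longrightarrow> bform B (g *v x) (g *v y) = bform B x y"
  by (simp add: bform_mat O_L_def)

context fixes Mo assumes Mo_sub: "Mo \<subseteq> O_L B" and Mo_one: "mat 1 \<in> Mo"
    and Mo_mult: "\<forall>g\<in>Mo. \<forall>h\<in>Mo. g ** h \<in> Mo"
    and Mo_inv: "\<forall>g\<in>Mo. \<exists>h\<in>Mo. g ** h = mat 1"
begin

lemma Mo_two: assumes "g \<in> Mo" shows "\<exists>h\<in>Mo. g ** h = mat 1 \<and> h ** g = mat 1"
proof -
  obtain h where h: "h \<in> Mo" "g ** h = mat 1" using Mo_inv assms by blast
  obtain h' where h': "g ** h' = mat 1" "h' ** g = mat 1" using Mo_sub assms unfolding O_L_def by blast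
  have "h' = h' ** (g ** h)" using h by simp
  also have "\<dots> = h" by (simp add: matrix_mul_assoc h')
  finally show ?thesis using h h' by blast
qed

lemma Mo_fix_inv: assumes "g \<in> Mo_fix Mo J" shows "\<exists>h\<in>Mo_fix Mo J. g ** h = mat 1 \<and> h ** g = mat 1"
proof -
  have g: "g \<in> Mo" "\<forall>m. g *v (J *v m) = J *v m" using assms by (auto simp: Mo_fix_def)
  obtain h where h: "h \<in> Mo" "g ** h = mat 1" "h ** g = mat 1" using Mo_two[OF g(1)] by blast
  have "h *v (J *v m) = J *v m" for m
  proof -
    have "h *v (J *v m) = h *v (g *v (J *v m))" using g(2) by simp
    also have "\<dots> = (h ** g) *v (J *v m)" by (rule matrix_vector_mul_assoc)
    also have "\<dots> = J *v m" by (simp add: h(3))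
    finally show ?thesis .
  qed
  then show ?thesis using h by (auto simp: Mo_fix_def)
qed

lemma res_C: assumes g: "g \<in> Mo_fix Mo J" shows "res g \<in> carrier OG"
proof -
  have gM: "g \<in> O_L B" "\<forall>m. g *v (J *v m) = J *v m" using g Mo_sub by (auto simp: Mo_fix_def)
  obtain h where h: "h \<in> Mo_fix Mo J" "g ** h = mat 1" "h ** g = mat 1" using Mo_fix_inv[OF g] by blast
  have hM: "h \<in> O_L B" "\<forall>m. h *v (J *v m) = J *v m" using h(1) Mo_sub by (auto simp: Mo_fix_def)
  show ?thesis unfolding carrier_OG
  proof (intro conjI ballI)
    show "res g \<in> extensional NN" by (simp add: res_def)
    show "bij_betw (res g) NN NN"
    proof (rule bij_betw_byWitness[where f'="\<lambda>x. h *v x"])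
      show "\<forall>a\<in>NN. h *v res g a = a" by (simp add: res_def matrix_vector_mul_assoc h(3))
      show "\<forall>a'\<in>NN. res g (h *v a') = a'"
        using OL_N[OF hM] by (simp add: res_def matrix_vector_mul_assoc h(2))
      show "res g ` NN \<subseteq> NN" using OL_N[OF gM] by (auto simp: res_def)
      show "(\<lambda>x. h *v x) ` NN \<subseteq> NN" using OL_N[OF hM] by auto
    qed
    fix x y assume xy: "x \<in> NN" "y \<in> NN"
    show "res g (x + y) = res g x + res g y"
      using xy NN_add[OF xy] by (simp add: res_def matrix_vector_right_distrib)
    show "bform B (res g x) (res g y) = bform B x y"
      using xy OL_iso[OF gM(1)] by (simp add: res_def)
  qed
qed

lemma Mo_fix_mult: "g \<in> Mo_fix Mo J \<Longrightarrow> h \<in> Mo_fix Mo J \<Longrightarrow> g ** h \<in> Mo_fix Mo J"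
  using Mo_mult by (auto simp: Mo_fix_def matrix_vector_mul_assoc[symmetric])

lemma Mo_fix_one: "mat 1 \<in> Mo_fix Mo J"
  using Mo_one by (simp add: Mo_fix_def)

lemma res_mult: assumes "g \<in> Mo_fix Mo J" "h \<in> Mo_fix Mo J"
  shows "compose NN (res g) (res h) = res (g ** h)"
proof -
  have hM: "h \<in> O_L B" "\<forall>m. h *v (J *v m) = J *v m" using assms(2) Mo_sub by (auto simp: Mo_fix_def)
  show ?thesis using OL_N[OF hM]
    by (auto simp: compose_def res_def fun_eq_iff matrix_vector_mul_assoc)
qed

lemma res_one: "res (mat 1) = restrict id NN"
  by (simp add: res_def fun_eq_iff)

lemma Gamma_subgroup: "subgroup (Gamma B J Mo) OG"
proof (rule group.subgroupI[OF OG_group])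
  show "Gamma B J Mo \<subseteq> carrier OG" unfolding Gamma_eq using res_C by auto
  show "Gamma B J Mo \<noteq> {}" unfolding Gamma_eq using Mo_fix_one by auto
  fix a b assume a: "a \<in> Gamma B J Mo"
  then obtain g where g: "g \<in> Mo_fix Mo J" "a = res g" unfolding Gamma_eq by auto
  obtain h where h: "h \<in> Mo_fix Mo J" "g ** h = mat 1" "h ** g = mat 1" using Mo_fix_inv[OF g(1)] by blast
  have "inv\<^bsub>OG\<^esub> a = res h"
  proof (rule group.inv_equality[OF OG_group])
    show "res h \<otimes>\<^bsub>OG\<^esub> a = \<one>\<^bsub>OG\<^esub>" using g h res_mult res_one by (simp add: OG_simps)
    show "a \<in> carrier OG" using g res_C by simp
    show "res h \<in> carrier OG" using h res_C by simp
  qed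
  then show "inv\<^bsub>OG\<^esub> a \<in> Gamma B J Mo" unfolding Gamma_eq using h by auto
  assume b: "b \<in> Gamma B J Mo"
  then obtain g' where g': "g' \<in> Mo_fix Mo J" "b = res g'" unfolding Gamma_eq by auto
  show "a \<otimes>\<^bsub>OG\<^esub> b \<in> Gamma B J Mo"
    unfolding Gamma_eq using g g' res_mult Mo_fix_mult by (simp add: OG_simps)
qed

end
end

context LL begin

definition spv :: "(int^'n \<Rightarrow> int^'n) \<Rightarrow> (real^'n) list" where
  "spv f = (SOME vs. (\<forall>v\<in>set vs. bform (imat B) v v \<noteq> 0) \<and>
      (\<lambda>x. (imat (Ext f) :: real^'n^'n) *v x) = rprod (imat B) vs)"

lemma spv: assumes "det B \<noteq> 0" "f \<in> carrier OG" "kcong (d*e) f"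
  shows "(\<forall>v\<in>set (spv f). bform (imat B) v v \<noteq> 0) \<and>
      (\<lambda>x. (imat (Ext f) :: real^'n^'n) *v x) = rprod (imat B) (spv f)"
  unfolding spv_def
  by (rule someI_ex) (rule CD_int[OF symB assms(1) Ext_iso[OF assms(2,3)]])

definition "phi (v::real^'n) = - bform (imat B) v v / 2"

definition "rho a = (SOME b. b \<in> carrier OG \<and> resid b = resid a)"
definition "cc a = compose NN a (finv (rho a))"
definition "Phi a = (resid a, det (Ext (cc a)), prod_list (map phi (spv (cc a))) > 0)"

lemma rho: "a \<in> carrier OG \<Longrightarrow> rho a \<in> carrier OG \<and> resid (rho a) = resid a"
  unfolding rho_def by (rule someI[where x=a]) simp

lemma cc: assumes "a \<in> carrier OG" shows "cc a \<in> carrier OG" "kcong (d*e) (cc a)"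
  using rho[OF assms] assms OG_closed finv_C resid_cong unfolding cc_def by auto

lemma prod_nz: "\<forall>v\<in>set vs. bform (imat B) v v \<noteq> 0 \<Longrightarrow> prod_list (map phi vs) \<noteq> 0"
  by (induction vs) (auto simp: phi_def)

lemma Phi_range: "Phi ` carrier OG \<subseteq> {M. \<forall>i j. M$i$j \<in> {0..<d*d*e}} \<times> {1, -1} \<times> UNIV"
proof (rule image_subsetI)
  fix a assume a: "a \<in> carrier OG"
  have "det (Ext (cc a)) \<in> {1, -1}" using Ext_det[OF cc[OF a]] by simp
  then show "Phi a \<in> {M. \<forall>i j. M$i$j \<in> {0..<d*d*e}} \<times> {1, -1} \<times> UNIV"
    using resid_range[of a] unfolding Phi_def by simp
qed

context fixes Mo assumes Mo_sub: "Mo \<subseteq> O_L B" and Mo_one: "mat 1 \<in> Mo"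
    and Mo_mult: "\<forall>g\<in>Mo. \<forall>h\<in>Mo. g ** h \<in> Mo"
    and Mo_inv: "\<forall>g\<in>Mo. \<exists>h\<in>Mo. g ** h = mat 1"
    and hyp: "tSO_plus B \<subseteq> Mo" and detB: "det B \<noteq> 0"
begin

lemma key: assumes a: "a \<in> carrier OG" and b: "b \<in> carrier OG" and P: "Phi a = Phi b"
  shows "a \<otimes>\<^bsub>OG\<^esub> inv\<^bsub>OG\<^esub> b \<in> Gamma B J Mo"
proof -
  have G: "group OG" by (rule OG_group)
  have rab: "resid a = resid b" using P by (simp add: Phi_def)
  have rr: "rho a = rho b" unfolding rho_def rab ..
  define r where "r = rho a"
  have r: "r \<in> carrier OG" using rho[OF a] r_def by simp
  define ca where "ca = cc a"
  define cb where "cb = cc b"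
  have ca: "ca \<in> carrier OG" "kcong (d*e) ca" using cc[OF a] ca_def by auto
  have cb: "cb \<in> carrier OG" "kcong (d*e) cb" using cc[OF b] cb_def by auto
  have icb: "finv cb \<in> carrier OG" "kcong (d*e) (finv cb)" using finv_C[OF cb(1)] kcong_inv[OF cb] by auto
  define t where "t = a \<otimes>\<^bsub>OG\<^esub> inv\<^bsub>OG\<^esub> b"
  have t_eq: "t = compose NN ca (finv cb)"
  proof -
    have caE: "ca = a \<otimes>\<^bsub>OG\<^esub> inv\<^bsub>OG\<^esub> r" using OG_inv[OF r] by (simp add: ca_def cc_def r_def OG_simps)
    have cbE: "cb = b \<otimes>\<^bsub>OG\<^esub> inv\<^bsub>OG\<^esub> r" using OG_inv[OF r] by (simp add: cb_def cc_def r_def rr OG_simps)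
    have ir: "inv\<^bsub>OG\<^esub> r \<in> carrier OG" using G r by (rule group.inv_closed)
    have ib: "inv\<^bsub>OG\<^esub> b \<in> carrier OG" using G b by (rule group.inv_closed)
    have "ca \<otimes>\<^bsub>OG\<^esub> inv\<^bsub>OG\<^esub> cb = (a \<otimes>\<^bsub>OG\<^esub> inv\<^bsub>OG\<^esub> r) \<otimes>\<^bsub>OG\<^esub> (r \<otimes>\<^bsub>OG\<^esub> inv\<^bsub>OG\<^esub> b)"
      unfolding caE cbE using G b ir by (simp add: group.inv_mult_group group.inv_inv r)
    also have "\<dots> = a \<otimes>\<^bsub>OG\<^esub> (inv\<^bsub>OG\<^esub> r \<otimes>\<^bsub>OG\<^esub> r) \<otimes>\<^bsub>OG\<^esub> inv\<^bsub>OG\<^esub> b"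
      using G a r ir ib by (simp add: group.is_monoid monoid.m_assoc group.inv_closed monoid.m_closed)
    also have "\<dots> = t" using G a r ib by (simp add: group.l_inv t_def group.is_monoid monoid.r_one)
    finally show ?thesis using OG_inv[OF cb(1)] by (simp add: OG_simps)
  qed
  have tk: "t \<in> carrier OG" "kcong (d*e) t" unfolding t_eq using OG_closed kcong_mult ca cb icb by auto
  define g where "g = Ext t"
  have g_mult: "g = Ext ca ** Ext (finv cb)" unfolding g_def t_eq by (rule Ext_mult[OF ca(1) icb(1) ca(2) icb(2)])
  have inv_b: "Ext cb ** Ext (finv cb) = mat 1" by (rule Ext_inv(1)[OF cb])
  have detg: "det g = 1"
  proof -
    have "det (Ext ca) = det (Ext cb)" using P by (simp add: Phi_def ca_def cb_def)
    moreover have "det (Ext cb) * det (Ext (finv cb)) = 1" using det_mul[of "Ext cb" "Ext (finv cb)"] inv_b by simp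
    ultimately show ?thesis using det_mul[of "Ext ca" "Ext (finv cb)"] g_mult by simp
  qed
  define va where "va = spv ca"
  define vb where "vb = spv cb"
  have va: "\<forall>v\<in>set va. bform (imat B) v v \<noteq> 0" "(\<lambda>x. (imat (Ext ca) :: real^'n^'n) *v x) = rprod (imat B) va"
    using spv[OF detB ca] va_def by auto
  have vb: "\<forall>v\<in>set vb. bform (imat B) v v \<noteq> 0" "(\<lambda>x. (imat (Ext cb) :: real^'n^'n) *v x) = rprod (imat B) vb"
    using spv[OF detB cb] vb_def by auto
  have symR: "transpose (imat B :: real^'n^'n) = imat B" using symB by (simp add: imat_transpose[symmetric])
  have rinv: "(\<lambda>x. (imat (Ext (finv cb)) :: real^'n^'n) *v x) = rprod (imat B) (rev vb)"
  proof -
    have "(\<lambda>x. (imat (Ext (finv cb)) :: real^'n^'n) *v x)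
        = (rprod (imat B) (rev vb) \<circ> rprod (imat B) vb) \<circ> (\<lambda>x. (imat (Ext (finv cb)) :: real^'n^'n) *v x)"
      using rprod_rev[OF symR vb(1)] by simp
    also have "\<dots> = rprod (imat B) (rev vb) \<circ> ((\<lambda>x. (imat (Ext cb) :: real^'n^'n) *v x) \<circ> (\<lambda>x. (imat (Ext (finv cb)) :: real^'n^'n) *v x))"
      unfolding vb(2) by (simp add: o_assoc)
    also have "(\<lambda>x. (imat (Ext cb) :: real^'n^'n) *v x) \<circ> (\<lambda>x. (imat (Ext (finv cb)) :: real^'n^'n) *v x) = id"
      by (simp add: fun_eq_iff matrix_vector_mul_assoc imat_mult[symmetric] inv_b imat_one)
    finally show ?thesis by simp
  qed
  have spin: "real_spinor_norm_one B g"
    unfolding real_spinor_norm_one_def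
  proof (intro exI[of _ "va @ rev vb"] conjI)
    show "\<forall>v\<in>set (va @ rev vb). bform (imat B) v v \<noteq> 0" using va(1) vb(1) by auto
    have "(\<lambda>x. (imat g :: real^'n^'n) *v x) = (\<lambda>x. (imat (Ext ca) :: real^'n^'n) *v x) \<circ> (\<lambda>x. (imat (Ext (finv cb)) :: real^'n^'n) *v x)"
      by (simp add: g_mult fun_eq_iff imat_mult matrix_vector_mul_assoc)
    also have "\<dots> = rprod (imat B) (va @ rev vb)" unfolding va(2) rinv rprod_append ..
    finally show "(\<lambda>x. (imat g :: real^'n^'n) *v x) = foldr (\<lambda>v f. reflection (imat B) v \<circ> f) (va @ rev vb) id"
      by (simp add: rprod_def)
    have pa: "prod_list (map phi va) \<noteq> 0" by (rule prod_nz[OF va(1)])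
    have pb: "prod_list (map phi vb) \<noteq> 0" by (rule prod_nz[OF vb(1)])
    have "(prod_list (map phi va) > 0) = (prod_list (map phi vb) > 0)"
      using P by (simp add: Phi_def ca_def cb_def va_def vb_def)
    then have "prod_list (map phi va) * prod_list (map phi vb) > 0"
      using pa pb by (cases "prod_list (map phi va) > 0") (auto simp: zero_less_mult_iff)
    then show "prod_list (map (\<lambda>v. - bform (imat B) v v / 2) (va @ rev vb)) > 0"
      by (simp add: phi_def[abs_def] rev_map[symmetric])
  qed
  have "g \<in> tSO_plus B"
    unfolding tSO_plus_def tO_plus_def using Ext_OL[OF tk] Ext_disc[OF tk] spin detg g_def by simp
  then have gMo: "g \<in> Mo_fix Mo J" using hyp Ext_J[OF tk] g_def by (auto simp: Mo_fix_def)
  have "res g = t"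
  proof
    fix x show "res g x = t x"
      using Ext_N[OF tk] f_ext[OF tk(1)] g_def by (cases "x \<in> NN") (auto simp: res_def extensional_def)
  qed
  then have "t \<in> res ` Mo_fix Mo J" using gMo by blast
  then show ?thesis unfolding Gamma_eq t_def[symmetric] .
qed

lemma arith: "arithmetic_subgroup (Gamma B J Mo) OG"
  unfolding arithmetic_subgroup_def
proof
  have G: "group OG" by (rule OG_group)
  have S: "subgroup (Gamma B J Mo) OG" by (rule Gamma_subgroup[OF Mo_sub Mo_one Mo_mult Mo_inv])
  show "subgroup (Gamma B J Mo) OG" by (rule S)
  define H where "H = Gamma B J Mo"
  have same: "H #>\<^bsub>OG\<^esub> a = H #>\<^bsub>OG\<^esub> b" if "a \<in> carrier OG" "b \<in> carrier OG" "Phi a = Phi b" for a b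
  proof -
    have "a \<in> H #>\<^bsub>OG\<^esub> b"
      using subgroup.rcos_module_rev[OF S G that(2,1)] key[OF that] H_def by simp
    then show ?thesis using group.repr_independence[OF G _ that(2) S[folded H_def]] by simp
  qed
  have fin: "finite (Phi ` carrier OG)"
    by (rule finite_subset[OF Phi_range]) (intro finite_cartesian_product finite_bounded_mats; simp)
  have "rcosets\<^bsub>OG\<^esub> H \<subseteq> (\<lambda>s. H #>\<^bsub>OG\<^esub> (SOME a. a \<in> carrier OG \<and> Phi a = s)) ` (Phi ` carrier OG)"
  proof
    fix C assume "C \<in> rcosets\<^bsub>OG\<^esub> H"
    then obtain a where a: "a \<in> carrier OG" "C = H #>\<^bsub>OG\<^esub> a" unfolding RCOSETS_def by auto
    define a' where "a' = (SOME a'. a' \<in> carrier OG \<and> Phi a' = Phi a)"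
    have a': "a' \<in> carrier OG \<and> Phi a' = Phi a" unfolding a'_def by (rule someI[where x=a]) (use a in simp)
    have "C = H #>\<^bsub>OG\<^esub> a'" using same[of a' a] a a' by simp
    then show "C \<in> (\<lambda>s. H #>\<^bsub>OG\<^esub> (SOME a. a \<in> carrier OG \<and> Phi a = s)) ` (Phi ` carrier OG)"
      using a(1) a'_def by blast
  qed
  then show "finite (rcosets\<^bsub>OG\<^esub> Gamma B J Mo)" unfolding H_def[symmetric]
    by (rule finite_subset) (rule finite_imageI[OF fin])
qed

end
end

theorem mainTheorem10:
  fixes B :: "int^'n^'n" and BM :: "int^'m^'m" and J :: "int^'m^'n"
    and Mo :: "(int^'n^'n) set"
  assumes L: "has_pos_signature B 3" "even_lattice B"
    and M: "has_pos_signature BM 1"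
    and j: "primitive_embedding B BM J"
    and Mo_sub: "Mo \<subseteq> O_L B"
    and Mo_one: "mat 1 \<in> Mo"
    and Mo_mult: "\<forall>g\<in>Mo. \<forall>h\<in>Mo. g ** h \<in> Mo"
    and Mo_inv: "\<forall>g\<in>Mo. \<exists>h\<in>Mo. g ** h = mat 1"
    and hyp: "tSO_plus B \<subseteq> Mo"
  shows "arithmetic_subgroup (Gamma B J Mo) (O_sub B (orth_compl B J))"
proof -
  have symB: "transpose B = B" using L(1) by (simp add: has_pos_signature_def symmetric_gram_def)
  have detB: "det B \<noteq> 0" using L(1) by (simp add: has_pos_signature_def nondegenerate_def)
  have BM: "transpose J ** B ** J = BM" using j by (simp add: primitive_embedding_def)
  have detBM: "det BM \<noteq> 0" using M by (simp add: has_pos_signature_def nondegenerate_def)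
  obtain d Dm where d: "d > 0" "BM ** Dm = mat d" "Dm ** BM = mat d" using common_denom[OF detBM] by blast
  obtain e Eb where e: "e > 0" "B ** Eb = mat e" "Eb ** B = mat e" using common_denom[OF detB] by blast
  interpret LL B J d e Dm Eb
    by unfold_locales (simp_all add: symB d e BM)
  have "arithmetic_subgroup (Gamma B J Mo) OG"
    by (rule arith[OF Mo_sub Mo_one Mo_mult Mo_inv hyp detB])
  then show ?thesis by (simp add: OG_def NN_def)
qed

end
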